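(* Let $E\in\{E_0,E_{1728}\}$ and let $\varphi\in\operatorname{Aut}(E)$ with $\varphi\neq[\pm1]$. If $\theta\in\operatorname{End}(E)$ is non-zero and satisfies $\bar\varphi\theta=\theta\varphi$, then $\deg\theta\ge p$.
   Context: $E_0:y^2=x^3-1$ over $\overline{\mathbb{F}}_p$ with $p\equiv2\pmod3$, and $E_{1728}:y^2=x^3-x$ over $\overline{\mathbb{F}}_p$ with $p\equiv3\pmod4$ (so that the curve in question is supersingular). $\bar\varphi$ denotes the dual (conjugate) of $\varphi$, i.e. $\bar\varphi=\varphi^{-1}$. *)

theory Defs
  imports "HOL-Computational_Algebra.Computational_Algebra"
begin

datatype 'a ecpt = Infty | Pt 'a 'a

definition on_curve :: "'a::field \<Rightarrow> 'a \<Rightarrow> 'a ecpt \<Rightarrow> bool" where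
  "on_curve a b P = (case P of Infty \<Rightarrow> True | Pt x y \<Rightarrow> y^2 = x^3 + a*x + b)"

definition ec_neg :: "'a::field ecpt \<Rightarrow> 'a ecpt" where
  "ec_neg P = (case P of Infty \<Rightarrow> Infty | Pt x y \<Rightarrow> Pt x (-y))"

(* chord-tangent group law (valid in characteristic <> 2) *)
fun ec_add :: "'a::field \<Rightarrow> 'a \<Rightarrow> 'a ecpt \<Rightarrow> 'a ecpt \<Rightarrow> 'a ecpt" where
  "ec_add a b Infty Q = Q"
| "ec_add a b (Pt x1 y1) Infty = Pt x1 y1"
| "ec_add a b (Pt x1 y1) (Pt x2 y2) =
     (if x1 = x2 then
        (if y1 = - y2 then Infty
         else (let l = (3 * x1^2 + a) / (2 * y1);
                   x3 = l^2 - 2 * x1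
               in Pt x3 (l * (x1 - x3) - y1)))
      else (let l = (y2 - y1) / (x2 - x1);
                x3 = l^2 - x1 - x2
            in Pt x3 (l * (x1 - x3) - y1)))"

(* Standard form of an endomorphism (Washington, Elliptic Curves, Sect. 2.9):
   alpha(x,y) = (r1(x), y r2(x)) with r1 = p/q in lowest terms, r2 = u/v;
   alpha(x,y) = O exactly when q(x) = 0. *)
definition endo_rep :: "'a::field \<Rightarrow> 'a \<Rightarrow> ('a ecpt \<Rightarrow> 'a ecpt)
     \<Rightarrow> 'a poly \<Rightarrow> 'a poly \<Rightarrow> 'a poly \<Rightarrow> 'a poly \<Rightarrow> bool" where
  "endo_rep a b \<theta> p q u v \<longleftrightarrow> coprime p q \<and>
     (\<forall>x y. on_curve a b (Pt x y) \<longrightarrow>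
        (poly q x \<noteq> 0 \<longrightarrow> poly v x \<noteq> 0) \<and>
        \<theta> (Pt x y) = (if poly q x = 0 then Infty
                      else Pt (poly p x / poly q x) (y * poly u x / poly v x)))"

definition is_endo :: "'a::field \<Rightarrow> 'a \<Rightarrow> ('a ecpt \<Rightarrow> 'a ecpt) \<Rightarrow> bool" where
  "is_endo a b \<theta> \<longleftrightarrow>
     (\<forall>P. on_curve a b P \<longrightarrow> on_curve a b (\<theta> P)) \<and>
     (\<forall>P Q. on_curve a b P \<longrightarrow> on_curve a b Q \<longrightarrow>
        \<theta> (ec_add a b P Q) = ec_add a b (\<theta> P) (\<theta> Q)) \<and>
     (\<exists>p q u v. endo_rep a b \<theta> p q u v)"

definition ec_deg :: "'a::field \<Rightarrow> 'a \<Rightarrow> ('a ecpt \<Rightarrow> 'a ecpt) \<Rightarrow> nat" where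
  "ec_deg a b \<theta> = (THE n. \<exists>p q u v. endo_rep a b \<theta> p q u v \<and> n = max (degree p) (degree q))"

definition algebraic_over_prime_field :: "'a::field itself \<Rightarrow> bool" where
  "algebraic_over_prime_field _ \<longleftrightarrow>
     (\<forall>x::'a. \<exists>P. P \<noteq> 0 \<and> (\<forall>i. coeff P i \<in> range of_nat) \<and> poly P x = 0)"

end

theory Submission
  imports Defs
begin

lemma alg_closed_infinite: "infinite (UNIV :: 'k::alg_closed_field set)"
proof
  assume fin: "finite (UNIV :: 'k set)"
  define W :: "'k poly" where "W = (\<Prod>x\<in>UNIV. [:-x,1:]) + 1"
  have d: "degree (\<Prod>x\<in>(UNIV::'k set). [:-x,1:]) = card (UNIV::'k set)"
    by (subst degree_prod_eq_sum_degree) auto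
  have "card (UNIV::'k set) > 0" using fin by (simp add: finite_UNIV_card_ge_0)
  hence "degree W > 0" unfolding W_def using d
    by (metis degree_add_eq_left degree_1)
  then obtain x where "poly W x = 0" using alg_closed_imp_poly_has_root by blast
  moreover have "poly (\<Prod>x\<in>(UNIV::'k set). [:-x,1:]) x = 0"
    using fin by (simp add: poly_prod)
  ultimately show False unfolding W_def by simp
qed

lemma ex_nonroot: fixes W :: "'k::alg_closed_field poly"
  assumes "W \<noteq> 0" shows "\<exists>x. poly W x \<noteq> 0"
proof (rule ccontr)
  assume "\<not> ?thesis"
  hence "{x. poly W x = 0} = UNIV" by auto
  with poly_roots_finite[OF assms] alg_closed_infinite show False by metis
qed

lemma poly_ext0: fixes A :: "'k::alg_closed_field poly"
  assumes "\<And>x. poly A x = 0" shows "A = 0"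
  using ex_nonroot assms by blast

lemma poly_ext_cof: fixes A B W :: "'k::alg_closed_field poly"
  assumes "W \<noteq> 0" "\<And>x. poly W x \<noteq> 0 \<Longrightarrow> poly A x = poly B x"
  shows "A = B"
proof -
  have "(A - B) * W = 0"
    by (rule poly_ext0) (use assms(2) in \<open>auto\<close>)
  with assms(1) show ?thesis by simp
qed

lemma poly_ext_all: fixes A B :: "'k::alg_closed_field poly"
  assumes "\<And>x. poly A x = poly B x" shows "A = B"
  by (rule poly_ext_cof[of 1]) (use assms in auto)

lemma coprime_roots: fixes A B :: "'k::alg_closed_field poly"
  shows "coprime A B \<longleftrightarrow> (\<forall>x. poly A x \<noteq> 0 \<or> poly B x \<noteq> 0)"
proof
  assume c: "coprime A B"
  show "\<forall>x. poly A x \<noteq> 0 \<or> poly B x \<noteq> 0"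
  proof (intro allI, rule ccontr)
    fix x assume "\<not> (poly A x \<noteq> 0 \<or> poly B x \<noteq> 0)"
    hence r: "poly A x = 0" "poly B x = 0" by auto
    have d1: "[:-x,1:] dvd A" using r(1) by (rule poly_eq_0_iff_dvd[THEN iffD1])
    have d2: "[:-x,1:] dvd B" using r(2) by (rule poly_eq_0_iff_dvd[THEN iffD1])
    have u: "is_unit [:-x,1:]" by (rule coprime_common_divisor[OF c d1 d2])
    have "\<not> is_unit [:-x,1::'k:]" by (subst is_unit_iff_degree) auto
    with u show False by contradiction
  qed
next
  assume r: "\<forall>x. poly A x \<noteq> 0 \<or> poly B x \<noteq> 0"
  show "coprime A B"
    unfolding coprime_def
  proof (intro allI impI, rule ccontr)
    fix g assume gA: "g dvd A" and gB: "g dvd B" and nu: "\<not> is_unit g"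
    have "g \<noteq> 0"
    proof
      assume "g = 0"
      hence "A = 0" "B = 0" using gA gB by auto
      with r show False by auto
    qed
    with nu have "degree g > 0" using is_unit_iff_degree[of g] by simp
    then obtain x where "poly g x = 0" using alg_closed_imp_poly_has_root by blast
    hence "[:-x,1:] dvd g" by (rule poly_eq_0_iff_dvd[THEN iffD1])
    hence "[:-x,1:] dvd A" "[:-x,1:] dvd B" using gA gB dvd_trans by blast+
    hence "poly A x = 0" "poly B x = 0" using poly_eq_0_iff_dvd[THEN iffD2] by blast+
    with r show False by auto
  qed
qed

lemma dvd_by_order: fixes A B :: "'k::alg_closed_field poly"
  assumes "A \<noteq> 0" "B \<noteq> 0" "\<And>x. order x A \<le> order x B"
  shows "A dvd B"
  using assms
proof (induction "degree A" arbitrary: A B rule: less_induct)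
  case less
  show ?case
  proof (cases "degree A = 0")
    case True
    then obtain c where "A = [:c:]" by (metis degree_eq_zeroE)
    with less.prems have "is_unit A" by (simp add: is_unit_iff_degree)
    thus ?thesis by (rule unit_imp_dvd)
  next
    case False
    then obtain x0 where r: "poly A x0 = 0" using alg_closed_imp_poly_has_root by blast
    then obtain A1 where A1: "A = [:-x0,1:] * A1" by (auto simp: poly_eq_0_iff_dvd)
    have "order x0 A \<ge> 1" using r less.prems(1) by (simp add: order_root) 
    hence "order x0 B \<ge> 1" using less.prems(3)[of x0] by simp
    hence "poly B x0 = 0" using less.prems(2) by (simp add: order_root)
    then obtain B1 where B1: "B = [:-x0,1:] * B1" by (auto simp: poly_eq_0_iff_dvd)
    have nz: "A1 \<noteq> 0" "B1 \<noteq> 0" using A1 B1 less.prems by auto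
    have "degree A = degree [:-x0,1::'k:] + degree A1" unfolding A1 by (rule degree_mult_eq) (use nz in auto)
    hence "degree A = 1 + degree A1" by simp
    hence dlt: "degree A1 < degree A" by simp
    have "order x A1 \<le> order x B1" for x
    proof -
      have "order x A = order x [:-x0,1:] + order x A1"
        unfolding A1 by (rule order_mult) (metis A1 less.prems(1))
      moreover have "order x B = order x [:-x0,1:] + order x B1"
        unfolding B1 by (rule order_mult) (metis B1 less.prems(2))
      ultimately show ?thesis using less.prems(3)[of x] by linarith
    qed
    hence "A1 dvd B1" using less.hyps[OF dlt nz] by blast
    thus ?thesis unfolding A1 B1 by (rule mult_dvd_mono[OF dvd_refl])
  qed
qed


lemma order_le_of_dvd: fixes A D :: "'k::field poly"
  assumes "A dvd D" "D \<noteq> 0" shows "order x A \<le> order x D"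
proof -
  from assms(1) obtain K where K: "D = A * K" by (auto elim: dvdE)
  have "order x D = order x A + order x K" unfolding K by (rule order_mult) (use K assms(2) in simp)
  thus ?thesis by simp
qed

lemma order0_of_nonroot: "poly A x \<noteq> 0 \<Longrightarrow> order x A = 0"
  using order_root by blast

lemma no_roots_unit: fixes A :: "'k::alg_closed_field poly"
  assumes "\<And>x. poly A x \<noteq> 0" shows "is_unit A"
proof -
  have "A \<noteq> 0" using assms by auto
  moreover have "degree A = 0" using assms alg_closed_imp_poly_has_root by blast
  ultimately show ?thesis by (simp add: is_unit_iff_degree)
qed

lemma coprime_dvd_cancel: fixes A B C :: "'k::alg_closed_field poly"
  assumes c: "coprime A C" and d: "A dvd B * C" shows "A dvd B"
proof (cases "C = 0")
  case True
  with c have "\<And>x. poly A x \<noteq> 0" by (auto simp: coprime_roots)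
  hence "is_unit A" by (rule no_roots_unit)
  thus ?thesis by (rule unit_imp_dvd)
next
  case Cnz: False
  show ?thesis
  proof (cases "B = 0")
    case True thus ?thesis by simp
  next
    case Bnz: False
    hence BC: "B * C \<noteq> 0" using Cnz by simp
    have Anz: "A \<noteq> 0" using d BC by auto
    show ?thesis
    proof (rule dvd_by_order[OF Anz Bnz])
      fix x
      have "order x A \<le> order x (B*C)" by (rule order_le_of_dvd[OF d BC])
      also have "\<dots> = order x B + order x C" by (rule order_mult[OF BC])
      finally have le: "order x A \<le> order x B + order x C" .
      show "order x A \<le> order x B"
      proof (cases "poly A x = 0")
        case True
        with c have "poly C x \<noteq> 0" by (auto simp: coprime_roots)
        hence "order x C = 0" by (rule order0_of_nonroot)
        with le show ?thesis by simp
      next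
        case False
        hence "order x A = 0" by (rule order0_of_nonroot)
        thus ?thesis by simp
      qed
    qed
  qed
qed

lemma coprime_mult_dvd: fixes A B C :: "'k::alg_closed_field poly"
  assumes c: "coprime A B" and d1: "A dvd C" and d2: "B dvd C" shows "A * B dvd C"
proof (cases "C = 0")
  case True thus ?thesis by simp
next
  case Cnz: False
  have Anz: "A \<noteq> 0" and Bnz: "B \<noteq> 0" using d1 d2 Cnz by auto
  hence ABnz: "A * B \<noteq> 0" by simp
  show ?thesis
  proof (rule dvd_by_order[OF ABnz Cnz])
    fix x
    have "order x (A*B) = order x A + order x B" by (rule order_mult[OF ABnz])
    moreover have "order x A \<le> order x C" by (rule order_le_of_dvd[OF d1 Cnz])
    moreover have "order x B \<le> order x C" by (rule order_le_of_dvd[OF d2 Cnz])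
    moreover have "order x A = 0 \<or> order x B = 0"
    proof (cases "poly A x = 0")
      case True
      with c have "poly B x \<noteq> 0" by (auto simp: coprime_roots)
      hence "order x B = 0" by (rule order0_of_nonroot)
      thus ?thesis by (rule disjI2)
    next
      case False
      hence "order x A = 0" by (rule order0_of_nonroot)
      thus ?thesis by (rule disjI1)
    qed
    ultimately show "order x (A*B) \<le> order x C" by linarith
  qed
qed

lemma dvd_pderiv_pow: fixes A X :: "'k::field poly"
  assumes "X^k dvd A" shows "X^(k-1) dvd pderiv A"
proof (cases k)
  case 0 thus ?thesis by simp
next
  case (Suc j)
  from assms obtain C where C: "A = X^k * C" by (auto elim: dvdE)
  have e1: "pderiv (X^k) = smult (of_nat k) (X^j) * pderiv X" by (simp only: Suc pderiv_power_Suc)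
  have e2: "X^k = X^j * X" by (simp only: Suc power_Suc2)
  have "pderiv A = X^k * pderiv C + C * pderiv (X^k)"
    by (simp add: C pderiv_mult)
  also have "\<dots> = X^k * pderiv C + C * (smult (of_nat k) (X^j) * pderiv X)"
    by (simp only: e1)
  also have "\<dots> = X^j * (X * pderiv C + C * smult (of_nat k) (pderiv X))"
    by (simp only: e2) (simp add: algebra_simps)
  finally show ?thesis using Suc by simp
qed

definition sc :: "'a::comm_ring_1 \<Rightarrow> 'a poly \<Rightarrow> 'a poly" where
  "sc c A = pcompose A [:0, c:]"

lemma coeff_sc: "coeff (sc c A) i = c^i * coeff A i"
  unfolding sc_def
proof (induction A arbitrary: i)
  case (pCons a p)
  show ?case
    by (cases i) (auto simp: pcompose_pCons pCons.IH coeff_pCons)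
qed simp

lemma poly_sc: "poly (sc c A) x = poly A (c*x)"
  by (simp add: sc_def poly_pcompose mult.commute)

lemma degree_sc: fixes A :: "'a::field poly" shows "c \<noteq> 0 \<Longrightarrow> degree (sc c A) = degree A"
  by (simp add: sc_def degree_pcompose)

lemma sc_mult: "sc c (A*B) = sc c A * sc c B" by (simp add: sc_def pcompose_mult)
lemma sc_add: "sc c (A+B) = sc c A + sc c B" by (simp add: sc_def pcompose_add)
lemma sc_diff: fixes A :: "'a::comm_ring_1 poly" shows "sc c (A-B) = sc c A - sc c B" by (simp add: sc_def pcompose_diff)
lemma sc_smult: "sc c (smult d A) = smult d (sc c A)" by (simp add: sc_def pcompose_smult)
lemma sc_one: "sc c 1 = 1" by (simp add: sc_def pcompose_1)
lemma sc_pow: "sc c (A^n) = (sc c A)^n" by (induction n) (simp_all add: sc_mult sc_one)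
lemma pderiv_sc: "pderiv (sc c A) = smult c (sc c (pderiv A))"
  by (simp add: sc_def pderiv_pcompose pderiv_pCons)
lemma sc_eq0: fixes A :: "'a::field poly" shows "c \<noteq> 0 \<Longrightarrow> sc c A = 0 \<longleftrightarrow> A = 0"
  by (metis coeff_sc degree_sc leading_coeff_0_iff mult_eq_0_iff power_eq_0_iff)

lemma identA: fixes P Q A B :: "'k::field poly"
  assumes "pderiv A = 0" "pderiv B = 0"
  shows "Q * pderiv (P*P*P + A*(P*Q*Q) + B*(Q*Q*Q)) - 3 * (pderiv Q * (P*P*P + A*(P*Q*Q) + B*(Q*Q*Q)))
   = (3*(P*P) + A*(Q*Q)) * (pderiv P * Q - P * pderiv Q)"
  by (simp add: pderiv_add pderiv_mult assms algebra_simps)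

lemma ident: fixes P Q :: "'k::field poly" and a b :: 'k
  shows "Q * pderiv (P^3 + smult a (P*Q^2) + smult b (Q^3)) - smult 3 (pderiv Q * (P^3 + smult a (P*Q^2) + smult b (Q^3)))
   = (smult 3 (P^2) + smult a (Q^2)) * (pderiv P * Q - P * pderiv Q)"
proof -
  have sm: "\<And>c p. smult c p = [:c:] * p" by simp
  have e3: "[:3::'k:] = 3" by (simp add: numeral_poly)
  show ?thesis using identA[of "[:a:]" "[:b:]" Q P]
    by (simp only: sm e3 power3_eq_cube power2_eq_square pderiv_pCons) (simp add: mult.assoc)
qed

lemma degree_pderiv_le: "degree (pderiv A) \<le> degree A - 1"
  by (rule degree_le) (auto simp: coeff_pderiv coeff_eq_0)

lemma pderiv_deg0: fixes A :: "'k::field poly" assumes "degree A = 0" shows "pderiv A = 0"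
proof -
  obtain c where "A = [:c:]" using assms by (metis degree_eq_zeroE)
  thus ?thesis by (simp add: pderiv_pCons)
qed

lemma pderiv0_small: fixes A :: "'k::field poly"
  assumes "pderiv A = 0" "degree A < CHAR('k)" shows "degree A = 0"
proof (rule ccontr)
  assume "degree A \<noteq> 0"
  then obtain j where j: "degree A = Suc j" by (cases "degree A") auto
  have "coeff (pderiv A) j = of_nat (Suc j) * lead_coeff A" by (simp add: coeff_pderiv j)
  moreover have "of_nat (Suc j) \<noteq> (0::'k)"
  proof
    assume "of_nat (Suc j) = (0::'k)"
    hence "CHAR('k) dvd Suc j" by (rule of_nat_eq_0_iff_char_dvd[THEN iffD1])
    hence "CHAR('k) \<le> Suc j" by (rule dvd_imp_le) simp
    with assms(2) j show False by simp
  qed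
  moreover have "lead_coeff A \<noteq> 0"
  proof -
    have "A \<noteq> 0" using j by auto
    thus ?thesis by simp
  qed
  ultimately show False using assms(1) by simp
qed

lemma dvd_same_degree: fixes A B :: "'k::field poly"
  assumes "A dvd B" "B \<noteq> 0" "degree B \<le> degree A"
  shows "\<exists>c. c \<noteq> 0 \<and> B = smult c A"
proof -
  from assms(1) obtain C where C: "B = A * C" by (auto elim: dvdE)
  have nz: "A \<noteq> 0" "C \<noteq> 0" using C assms(2) by auto
  have "degree B = degree A + degree C" unfolding C by (rule degree_mult_eq[OF nz])
  hence "degree C = 0" using assms(3) by simp
  then obtain c where c: "C = [:c:]" by (metis degree_eq_zeroE)
  with nz have "c \<noteq> 0" by simp
  moreover have "B = smult c A" using C c by simp
  ultimately show ?thesis by blast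
qed

lemma smult_cancel_right: fixes X :: "'k::field poly"
  assumes "smult c X = smult d X" "X \<noteq> 0" shows "c = d"
proof -
  have "smult (c - d) X = 0" using assms(1) by (simp add: smult_diff_left)
  with assms(2) show ?thesis by simp
qed

lemma core:
  fixes P Q U V :: "'k::alg_closed_field poly" and a b al al' ta ta' :: 'k and p :: nat
  assumes charp: "CHAR('k) = p"
  and nocommon: "\<And>t. t^3 + a*t + b = 0 \<Longrightarrow> 3*t^2 + a \<noteq> 0"
  and cPQ: "coprime P Q" and Qnz: "Q \<noteq> 0" and cUV: "coprime U V" and Vnz: "V \<noteq> 0"
  and curve: "[:b,a,0,1:] * U^2 * Q^3 = (P^3 + smult a (P*Q^2) + smult b (Q^3)) * V^2"
  and degF: "degree (P^3 + smult a (P*Q^2) + smult b (Q^3)) \<ge> 2*degree P + degree Q + 1"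
  and sym1: "sc al P * Q = smult al' (P * sc al Q)"
  and sym2: "smult ta' (U * sc al V) = smult ta (sc al U * V)"
  and nz: "al \<noteq> 0" "al' \<noteq> 0" "ta \<noteq> 0" "ta' \<noteq> 0" and neq: "al' * ta \<noteq> al * ta'"
  shows "p \<le> max (degree P) (degree Q)"
proof (rule ccontr)
  assume small: "\<not> p \<le> max (degree P) (degree Q)"
  define F where "F = P^3 + smult a (P*Q^2) + smult b (Q^3)"
  define n where "n = degree P"
  define m where "m = degree Q"
  define f where "f = [:b,a,0,1::'k:]"
  have f0: "f \<noteq> 0" and f3: "degree f = 3" by (simp_all add: f_def)
  have curveF: "f * U^2 * Q^3 = F * V^2" using curve by (simp only: F_def f_def)
  have degF': "degree F \<ge> 2*n + m + 1" using degF by (simp add: F_def n_def m_def)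
  have Fnz: "F \<noteq> 0" using degF' by auto
  have Unz: "U \<noteq> 0"
  proof
    assume "U = 0"
    with curveF have "F * V^2 = 0" by simp
    with Fnz Vnz show False by simp
  qed
  define u where "u = degree U"
  define v where "v = degree V"
  have degeq: "3 + 2*u + 3*m = degree F + 2*v"
  proof -
    have "degree (f * U^2 * Q^3) = 3 + 2*u + 3*m"
      using Unz Qnz f0 f3 by (simp add: degree_mult_eq degree_power_eq u_def m_def)
    moreover have "degree (F * V^2) = degree F + 2*v"
      using Fnz Vnz by (simp add: degree_mult_eq degree_power_eq v_def)
    ultimately show ?thesis using curveF by simp
  qed
  define G where "G = smult 3 (P^2) + smult a (Q^2)"
  define D where "D = pderiv P * Q - P * pderiv Q"
  have polyF: "poly F x = poly P x ^3 + a * poly P x * poly Q x ^2 + b * poly Q x ^3" for x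
    by (simp add: F_def)
  have cPQ': "poly P x \<noteq> 0 \<or> poly Q x \<noteq> 0" for x using cPQ by (simp add: coprime_roots)
  have cQF: "coprime Q F"
    unfolding coprime_roots
  proof
    fix x show "poly Q x \<noteq> 0 \<or> poly F x \<noteq> 0"
    proof (cases "poly Q x = 0")
      case True
      with cPQ' have "poly P x \<noteq> 0" by auto
      with True show ?thesis by (simp add: polyF)
    qed simp
  qed
  have cFG: "coprime F G"
    unfolding coprime_roots
  proof
    fix x show "poly F x \<noteq> 0 \<or> poly G x \<noteq> 0"
    proof (cases "poly Q x = 0")
      case True
      with cPQ' have "poly P x \<noteq> 0" by auto
      with True show ?thesis by (simp add: polyF)
    next
      case False
      define t where "t = poly P x / poly Q x"
      have Pt: "poly P x = t * poly Q x" using False by (simp add: t_def)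
      have "poly F x = poly Q x ^3 * (t^3 + a*t + b)"
        by (simp add: polyF Pt algebra_simps power2_eq_square power3_eq_cube)
      moreover have "poly G x = poly Q x ^2 * (3*t^2 + a)"
        by (simp add: G_def Pt algebra_simps power2_eq_square)
      ultimately show ?thesis using False nocommon[of t] by auto
    qed
  qed
  have cUV2: "coprime (U^2) (V^2)" using cUV by (simp add: coprime_roots)
  have U2F: "U^2 dvd F"
  proof -
    have "F * V^2 = U^2 * (f * Q^3)" using curveF by (simp add: algebra_simps)
    hence "U^2 dvd F * V^2" by simp
    thus ?thesis using coprime_dvd_cancel[OF cUV2] by blast
  qed
  have cQ3F: "coprime (Q^3) F" using cQF by (simp add: coprime_roots)
  have Q3V2: "Q^3 dvd V^2"
  proof -
    have "F * V^2 = Q^3 * (f * U^2)" using curveF by (simp add: algebra_simps)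
    hence "Q^3 dvd V^2 * F" by (simp add: mult.commute)
    thus ?thesis using coprime_dvd_cancel[OF cQ3F] by blast
  qed
  have UF: "U dvd F" using U2F by (rule dvd_trans[rotated]) (simp add: power2_eq_square)
  have UF': "U dvd pderiv F"
  proof -
    from U2F obtain W where W: "F = U^2 * W" by (auto elim: dvdE)
    have "pderiv F = U * (U * pderiv W + W * (pderiv U + pderiv U))"
      unfolding W by (simp add: pderiv_mult algebra_simps power2_eq_square)
    thus ?thesis by simp
  qed
  have UGD: "U dvd G * D"
  proof -
    have "G * D = Q * pderiv F - smult 3 (pderiv Q * F)"
      unfolding G_def D_def F_def by (rule ident[symmetric])
    moreover have "U dvd Q * pderiv F" using UF' by simp
    moreover have "U dvd smult 3 (pderiv Q * F)" using UF by (simp add: dvd_smult)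
    ultimately show ?thesis by (simp add: dvd_diff)
  qed
  have cUG: "coprime U G"
  proof -
    have "poly U x \<noteq> 0 \<or> poly G x \<noteq> 0" for x
    proof -
      have "poly F x \<noteq> 0 \<or> poly G x \<noteq> 0" using cFG by (simp add: coprime_roots)
      moreover have "poly F x = 0" if "poly U x = 0"
        using UF that by (metis dvdE mult_eq_0_iff poly_mult)
      ultimately show ?thesis by blast
    qed
    thus ?thesis by (simp add: coprime_roots)
  qed
  have "U dvd D * G" using UGD by (simp add: mult.commute)
  hence UD: "U dvd D" by (rule coprime_dvd_cancel[OF cUG])
  have cQU: "coprime (Q^2) U"
  proof -
    have "poly Q x \<noteq> 0 \<or> poly U x \<noteq> 0" for x
    proof -
      have "poly Q x \<noteq> 0 \<or> poly F x \<noteq> 0" using cQF by (simp add: coprime_roots)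
      moreover have "poly F x = 0" if "poly U x = 0"
        using UF that by (metis dvdE mult_eq_0_iff poly_mult)
      ultimately show ?thesis by blast
    qed
    thus ?thesis by (simp add: coprime_roots)
  qed
  have Q2DV: "Q^2 dvd D * V"
  proof (cases "D * V = 0")
    case True thus ?thesis by (metis dvd_0_right)
  next
    case DVnz: False
    show ?thesis
    proof (rule dvd_by_order)
      show "Q^2 \<noteq> 0" using Qnz by simp
      show "D * V \<noteq> 0" by (rule DVnz)
      fix x
      define X where "X = [:-x,1::'k:]"
      define k where "k = order x Q"
      define j where "j = order x V"
      have oQ2: "order x (Q^2) = 2*k"
        using order_mult[of Q Q x] Qnz by (simp add: power2_eq_square k_def)
      have XkQ: "X^k dvd Q" unfolding X_def k_def by (simp add: order_divides)
      have XjV: "X^j dvd V" unfolding X_def j_def by (simp add: order_divides)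
      have "order x (Q^3) \<le> order x (V^2)"
        by (rule order_le_of_dvd[OF Q3V2]) (use Vnz in simp)
      moreover have "order x (Q^3) = 3*k"
        using order_mult[of Q "Q^2" x] Qnz oQ2 by (simp add: power3_eq_cube power2_eq_square k_def mult.assoc)
      moreover have "order x (V^2) = 2*j"
        using order_mult[of V V x] Vnz by (simp add: power2_eq_square j_def)
      ultimately have kj: "3*k \<le> 2*j" by simp
      have "X^(2*k) dvd D * V"
      proof (cases "k = 0")
        case True thus ?thesis by simp
      next
        case False
        hence j1: "k + 1 \<le> j" "k \<le> j" using kj by linarith+
        have XkV: "X^k dvd V" using XjV j1(2) by (meson dvd_trans le_imp_power_dvd)
        have Xk1V: "X^(k+1) dvd V" using XjV j1(1) by (meson dvd_trans le_imp_power_dvd)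
        have Xk1Q': "X^(k-1) dvd pderiv Q" by (rule dvd_pderiv_pow[OF XkQ])
        have t1: "X^(2*k) dvd pderiv P * Q * V"
        proof -
          have "X^k * X^k dvd Q * V" by (rule mult_dvd_mono[OF XkQ XkV])
          hence "X^(2*k) dvd Q * V" by (simp add: mult_2 power_add)
          thus ?thesis by (simp add: mult.assoc)
        qed
        have t2: "X^(2*k) dvd P * pderiv Q * V"
        proof -
          have "X^(k-1) * X^(k+1) dvd pderiv Q * V" by (rule mult_dvd_mono[OF Xk1Q' Xk1V])
          moreover have "k - 1 + (k + 1) = 2*k" using False by simp
          ultimately have "X^(2*k) dvd pderiv Q * V" by (metis power_add)
          thus ?thesis by (simp add: mult.assoc)
        qed
        have "D * V = pderiv P * Q * V - P * pderiv Q * V" by (simp add: D_def algebra_simps)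
        thus ?thesis using t1 t2 by (simp add: dvd_diff)
      qed
      hence "2*k \<le> order x (D*V)" unfolding X_def using DVnz by (simp add: order_divides)
      thus "order x (Q^2) \<le> order x (D*V)" using oQ2 by simp
    qed
  qed
  have UDV: "U dvd D * V" using UD by simp
  have "Q^2 * U dvd D * V" by (rule coprime_mult_dvd[OF cQU Q2DV UDV])
  then obtain H where DVH: "D * V = Q^2 * U * H" by (rule dvdE)
  have scQnz: "sc al Q \<noteq> 0" using Qnz nz(1) by (simp add: sc_eq0)
  have scVnz: "sc al V \<noteq> 0" using Vnz nz(1) by (simp add: sc_eq0)
  have "Q dvd sc al Q"
  proof -
    have "Q dvd smult al' (P * sc al Q)" using sym1[symmetric] by simp
    hence "Q dvd sc al Q * P" using nz(2) by (simp add: dvd_smult_cancel mult.commute)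
    moreover have "coprime Q P" using cPQ by (simp add: coprime_commute)
    ultimately show ?thesis using coprime_dvd_cancel by blast
  qed
  then obtain lam where lam: "lam \<noteq> 0" "sc al Q = smult lam Q"
    using dvd_same_degree[OF _ scQnz] degree_sc[OF nz(1)] by (metis order.refl)
  have scP: "sc al P = smult (al' * lam) P"
  proof -
    have "sc al P * Q = smult (al' * lam) P * Q" using sym1 lam(2) by (simp add: mult.commute)
    thus ?thesis using Qnz mult_right_cancel by blast
  qed
  have "V dvd sc al V"
  proof -
    have "V dvd smult ta (sc al U * V)" by (intro dvd_smult) simp
    hence "V dvd smult ta' (U * sc al V)" using sym2 by simp
    hence "V dvd sc al V * U" using nz(4) by (simp add: dvd_smult_cancel mult.commute)
    moreover have "coprime V U" using cUV by (simp add: coprime_commute)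
    ultimately show ?thesis using coprime_dvd_cancel by blast
  qed
  then obtain mu where mu: "mu \<noteq> 0" "sc al V = smult mu V"
    using dvd_same_degree[OF _ scVnz] degree_sc[OF nz(1)] by (metis order.refl)
  have scU: "sc al U = smult (ta' * mu / ta) U"
  proof -
    have "smult ta (sc al U) * V = smult (ta' * mu) U * V" using sym2 mu(2) by (simp add: mult.commute)
    hence "smult ta (sc al U) = smult (ta' * mu) U" using Vnz mult_right_cancel by blast
    hence "smult (inverse ta) (smult ta (sc al U)) = smult (inverse ta) (smult (ta' * mu) U)" by simp
    thus ?thesis using nz(3) by (simp add: field_simps)
  qed
  have scP': "sc al (pderiv P) = smult (al' * lam / al) (pderiv P)"
  proof -
    have "smult al (sc al (pderiv P)) = smult (al' * lam) (pderiv P)"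
      using pderiv_sc[of al P] scP by (simp add: pderiv_smult)
    hence "smult (inverse al) (smult al (sc al (pderiv P))) = smult (inverse al) (smult (al' * lam) (pderiv P))" by simp
    thus ?thesis using nz(1) by (simp add: field_simps)
  qed
  have scQ': "sc al (pderiv Q) = smult (lam / al) (pderiv Q)"
  proof -
    have "smult al (sc al (pderiv Q)) = smult lam (pderiv Q)"
      using pderiv_sc[of al Q] lam(2) by (simp add: pderiv_smult)
    hence "smult (inverse al) (smult al (sc al (pderiv Q))) = smult (inverse al) (smult lam (pderiv Q))" by simp
    thus ?thesis using nz(1) by (simp add: field_simps)
  qed
  have scD: "sc al D = smult (al' * lam * lam / al) D"
    unfolding D_def sc_diff sc_mult scP' scQ' scP lam(2)
    by (simp add: algebra_simps smult_diff_right)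
  have Dz: "D = 0"
  proof (rule ccontr)
    assume Dnz: "D \<noteq> 0"
    have DVnz: "D * V \<noteq> 0" using Dnz Vnz by simp
    have Hnz: "H \<noteq> 0" using DVH DVnz by auto
    have "degree (D * V) = degree D + v" using Dnz Vnz by (simp add: degree_mult_eq v_def)
    moreover have "degree (Q^2 * U * H) = 2*m + u + degree H"
      using Qnz Unz Hnz by (simp add: degree_mult_eq degree_power_eq m_def u_def)
    ultimately have e1: "degree D + v = 2*m + u + degree H" using DVH by simp
    have nm: "n + m \<ge> 1"
    proof (rule ccontr)
      assume "\<not> n + m \<ge> 1"
      hence "n = 0" "m = 0" by auto
      hence "pderiv P = 0" "pderiv Q = 0" unfolding n_def m_def by (simp_all add: pderiv_deg0)
      hence "D = 0" by (simp add: D_def)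
      with Dnz show False by simp
    qed
    have "degree D \<le> n + m - 1"
    proof -
      have "degree (pderiv P * Q) \<le> n + m - 1"
      proof (cases "n = 0")
        case True
        hence "pderiv P = 0" unfolding n_def by (simp add: pderiv_deg0)
        thus ?thesis by simp
      next
        case False
        have "degree (pderiv P * Q) \<le> degree (pderiv P) + m" unfolding m_def by (rule degree_mult_le)
        also have "\<dots> \<le> (n - 1) + m" using degree_pderiv_le[of P] unfolding n_def by simp
        finally show ?thesis using False by simp
      qed
      moreover have "degree (P * pderiv Q) \<le> n + m - 1"
      proof (cases "m = 0")
        case True
        hence "pderiv Q = 0" unfolding m_def by (simp add: pderiv_deg0)
        thus ?thesis by simp
      next
        case False
        have "degree (P * pderiv Q) \<le> n + degree (pderiv Q)" unfolding n_def by (rule degree_mult_le)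
        also have "\<dots> \<le> n + (m - 1)" using degree_pderiv_le[of Q] unfolding m_def by simp
        finally show ?thesis using False by simp
      qed
      ultimately show ?thesis unfolding D_def using degree_diff_le by blast
    qed
    with e1 degeq degF' nm have "degree H = 0" by linarith
    then obtain h where h: "H = [:h:]" by (metis degree_eq_zeroE)
    with Hnz have hnz: "h \<noteq> 0" by simp
    have DV: "D * V = smult h (Q^2 * U)" using DVH h by simp
    have "sc al (D * V) = sc al (smult h (Q^2 * U))" using DV by simp
    hence "smult (al' * lam * lam / al) D * smult mu V = smult h ((smult lam Q)^2 * smult (ta' * mu / ta) U)"
      by (simp only: sc_mult sc_smult sc_pow scD mu(2) lam(2) scU)
    hence "smult (al' * lam * lam / al * mu) (D * V) = smult (h * lam^2 * (ta' * mu / ta)) (Q^2 * U)"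
      by (simp add: algebra_simps power2_eq_square)
    hence "smult (al' * lam * lam / al * mu * h) (Q^2 * U) = smult (h * lam^2 * (ta' * mu / ta)) (Q^2 * U)"
      by (simp add: DV)
    moreover have "Q^2 * U \<noteq> 0" using Qnz Unz by simp
    ultimately have "al' * lam * lam / al * mu * h = h * lam^2 * (ta' * mu / ta)"
      by (rule smult_cancel_right)
    hence "al' * ta = al * ta'" using nz lam(1) mu(1) hnz by (simp add: field_simps power2_eq_square)
    with neq show False by contradiction
  qed
  have e: "pderiv P * Q = P * pderiv Q" using Dz by (simp add: D_def)
  have "Q dvd pderiv Q"
  proof -
    have "Q dvd pderiv Q * P" using e by (metis dvd_triv_right mult.commute)
    moreover have "coprime Q P" using cPQ by (simp add: coprime_commute)
    ultimately show ?thesis using coprime_dvd_cancel by blast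
  qed
  have Q'0: "pderiv Q = 0"
  proof (rule ccontr)
    assume nz': "pderiv Q \<noteq> 0"
    hence "m \<ge> 1" unfolding m_def using pderiv_deg0[of Q] by linarith
    have "degree Q \<le> degree (pderiv Q)" by (rule dvd_imp_degree_le[OF \<open>Q dvd pderiv Q\<close> nz'])
    moreover have "degree (pderiv Q) \<le> m - 1" unfolding m_def by (rule degree_pderiv_le)
    ultimately show False using \<open>m \<ge> 1\<close> unfolding m_def by linarith
  qed
  have P'0: "pderiv P = 0" using e Q'0 Qnz by simp
  have "n = 0" unfolding n_def by (rule pderiv0_small[OF P'0]) (use small charp n_def in auto)
  moreover have "m = 0" unfolding m_def by (rule pderiv0_small[OF Q'0]) (use small charp m_def in auto)
  ultimately have "degree F = 0"
    unfolding F_def n_def m_def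
    by (metis (no_types, lifting) degree_add_le degree_mult_le degree_power_le degree_smult_le le_zero_eq
        add_0 mult_0 mult_0_right)
  with degF' show False by simp
qed

lemma ex_y: "\<exists>y. on_curve a b (Pt x (y::'k::alg_closed_field))"
proof -
  obtain y :: 'k where "y^2 = x^3 + a*x + b" using nth_root_exists[of 2] by auto
  thus ?thesis by (auto simp: on_curve_def)
qed

lemma rep_val:
  assumes "endo_rep a b \<theta> p q u v" "on_curve a b (Pt x y)" "poly q x \<noteq> 0"
  shows "\<theta> (Pt x y) = Pt (poly p x / poly q x) (y * poly u x / poly v x) \<and> poly v x \<noteq> 0"
  using assms unfolding endo_rep_def by auto

lemma rep_inf:
  assumes "endo_rep a b \<theta> p q u v" "on_curve a b (Pt x y)" "poly q x = 0"
  shows "\<theta> (Pt x y) = Infty"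
  using assms unfolding endo_rep_def by auto

lemma rep_coprime: "endo_rep a b \<theta> p q u v \<Longrightarrow> coprime p q"
  unfolding endo_rep_def by auto

lemma dbl_not_fixed:
  fixes x y a b :: "'k::field"
  assumes "ec_add a b (Pt x y) (Pt x y) = Pt x y"
  shows False
proof (cases "y = - y")
  case True
  with assms show False by simp
next
  case False
  define l where "l = (3 * x^2 + a) / (2 * y)"
  have "ec_add a b (Pt x y) (Pt x y) = Pt (l^2 - 2*x) (l * (x - (l^2 - 2*x)) - y)"
    using False by (simp add: l_def Let_def)
  with assms have "l^2 - 2*x = x" "l * (x - (l^2 - 2*x)) - y = y" by auto
  hence "- y = y" by simp
  with False show False by simp
qed

lemma endo_infty:
  fixes \<theta> :: "'k::field ecpt \<Rightarrow> 'k ecpt"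
  assumes "is_endo a b \<theta>" shows "\<theta> Infty = Infty"
proof (cases "\<theta> Infty")
  case (Pt x y)
  have hom: "\<forall>P Q. on_curve a b P \<longrightarrow> on_curve a b Q \<longrightarrow> \<theta> (ec_add a b P Q) = ec_add a b (\<theta> P) (\<theta> Q)"
    using assms unfolding is_endo_def by blast
  have e: "\<theta> Infty = ec_add a b (\<theta> Infty) (\<theta> Infty)"
    using hom[rule_format, of Infty Infty] by (simp add: on_curve_def)
  have "ec_add a b (Pt x y) (Pt x y) = Pt x y" by (metis e Pt)
  thus ?thesis using dbl_not_fixed by blast
qed simp

lemma dbl_on_curve:
  fixes x y a b :: "'k::field"
  assumes "on_curve a b (Pt x y)" "y \<noteq> - y"
  shows "on_curve a b (ec_add a b (Pt x y) (Pt x y))"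
proof -
  define l where "l = (3 * x^2 + a) / (2 * y)"
  have y2: "2 * y \<noteq> 0"
  proof
    assume "2 * y = 0"
    hence "y + y = 0" by (metis mult_2)
    hence "y = - y" by (metis eq_neg_iff_add_eq_0)
    with assms(2) show False by simp
  qed
  have h1: "y^2 = x^3 + a*x + b" using assms(1) by (simp add: on_curve_def)
  have h2: "2*y*l = 3*x^2 + a" using y2 by (simp add: l_def)
  have "(l*(x - (l^2-2*x)) - y)^2 = (l^2-2*x)^3 + a*(l^2-2*x) + b"
    using h1 h2 by algebra
  moreover have "ec_add a b (Pt x y) (Pt x y) = Pt (l^2 - 2*x) (l * (x - (l^2 - 2*x)) - y)"
    using assms(2) by (simp add: l_def Let_def)
  ultimately show ?thesis by (simp add: on_curve_def)
qed

lemma coprime_decomp: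
  fixes u v :: "'k::alg_closed_field poly"
  assumes "v \<noteq> 0" shows "\<exists>G U V. G \<noteq> 0 \<and> u = G*U \<and> v = G*V \<and> coprime U V"
  using assms
proof (induction "degree v" arbitrary: u v rule: less_induct)
  case less
  show ?case
  proof (cases "coprime u v")
    case True
    have "(1::'k poly) \<noteq> 0 \<and> u = 1*u \<and> v = 1*v \<and> coprime u v" using True by simp
    thus ?thesis by blast
  next
    case False
    then obtain x where r: "poly u x = 0" "poly v x = 0" by (auto simp: coprime_roots)
    define X where "X = [:-x,1::'k:]"
    have Xnz: "X \<noteq> 0" and dX: "degree X = 1" by (simp_all add: X_def)
    have "X dvd u" "X dvd v" using r unfolding X_def by (simp_all add: poly_eq_0_iff_dvd)
    then obtain u1 v1 where u1: "u = X * u1" and v1: "v = X * v1" by (auto elim!: dvdE)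
    have v1nz: "v1 \<noteq> 0" using v1 less.prems by auto
    have "degree v = degree X + degree v1" unfolding v1 by (rule degree_mult_eq[OF Xnz v1nz])
    hence "degree v1 < degree v" using dX by simp
    from less.hyps[OF this v1nz] obtain G U V where GUV: "G \<noteq> 0" "u1 = G*U" "v1 = G*V" "coprime U V" by blast
    have "X * G \<noteq> 0 \<and> u = (X * G) * U \<and> v = (X * G) * V \<and> coprime U V"
      using GUV u1 v1 Xnz by (simp add: mult.assoc)
    thus ?thesis by blast
  qed
qed

lemma ec_deg_eq:
  fixes \<theta> :: "'k::alg_closed_field ecpt \<Rightarrow> 'k ecpt"
  assumes rep: "endo_rep a b \<theta> P Q u v"
  shows "ec_deg a b \<theta> = max (degree P) (degree Q)"
  unfolding ec_deg_def
proof (rule the_equality)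
  show "\<exists>p q u v. endo_rep a b \<theta> p q u v \<and> max (degree P) (degree Q) = max (degree p) (degree q)"
    using rep by blast
next
  fix n assume "\<exists>p q u v. endo_rep a b \<theta> p q u v \<and> n = max (degree p) (degree q)"
  then obtain P2 Q2 u2 v2 where rep2: "endo_rep a b \<theta> P2 Q2 u2 v2" and n: "n = max (degree P2) (degree Q2)"
    by blast
  have zz: "poly Q x = 0 \<longleftrightarrow> poly Q2 x = 0" for x
  proof -
    obtain y where y: "on_curve a b (Pt x y)" using ex_y by blast
    show ?thesis
    proof
      assume "poly Q x = 0"
      hence "\<theta> (Pt x y) = Infty" using rep_inf[OF rep y] by simp
      thus "poly Q2 x = 0" using rep_val[OF rep2 y] by auto
    next
      assume "poly Q2 x = 0"
      hence "\<theta> (Pt x y) = Infty" using rep_inf[OF rep2 y] by simp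
      thus "poly Q x = 0" using rep_val[OF rep y] by auto
    qed
  qed
  have cP: "coprime P Q" and cP2: "coprime P2 Q2" using rep rep2 by (auto simp: rep_coprime)
  show "n = max (degree P) (degree Q)"
  proof (cases "Q = 0")
    case True
    hence Q2: "Q2 = 0" using zz by (intro poly_ext0) simp
    have "degree P = 0"
    proof -
      have "\<And>x. poly P x \<noteq> 0" using cP True by (simp add: coprime_roots)
      hence "is_unit P" by (rule no_roots_unit)
      thus ?thesis by (metis degree_0 is_unit_iff_degree)
    qed
    moreover have "degree P2 = 0"
    proof -
      have "\<And>x. poly P2 x \<noteq> 0" using cP2 Q2 by (simp add: coprime_roots)
      hence "is_unit P2" by (rule no_roots_unit)
      thus ?thesis by (metis degree_0 is_unit_iff_degree)
    qed
    ultimately show ?thesis using n True Q2 by simp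
  next
    case False
    have Q2nz: "Q2 \<noteq> 0"
    proof
      assume "Q2 = 0"
      hence "Q = 0" using zz by (intro poly_ext0) simp
      with False show False by simp
    qed
    have eq: "P * Q2 = P2 * Q"
    proof (rule poly_ext_cof[OF False])
      fix x assume qx: "poly Q x \<noteq> 0"
      hence q2x: "poly Q2 x \<noteq> 0" using zz by simp
      obtain y where y: "on_curve a b (Pt x y)" using ex_y by blast
      have "Pt (poly P x / poly Q x) (y * poly u x / poly v x) = Pt (poly P2 x / poly Q2 x) (y * poly u2 x / poly v2 x)"
        using rep_val[OF rep y qx] rep_val[OF rep2 y q2x] by simp
      hence "poly P x / poly Q x = poly P2 x / poly Q2 x" by simp
      thus "poly (P * Q2) x = poly (P2 * Q) x" using qx q2x by (simp add: field_simps)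
    qed
    have "Q dvd Q2 * P" using eq by (metis dvd_triv_right mult.commute)
    moreover have cQP: "coprime Q P" using cP by (simp add: coprime_commute)
    ultimately have d1: "Q dvd Q2" using coprime_dvd_cancel by blast
    have "Q2 dvd Q * P2" using eq by (metis dvd_triv_right mult.commute)
    moreover have cQP2: "coprime Q2 P2" using cP2 by (simp add: coprime_commute)
    ultimately have d2: "Q2 dvd Q" using coprime_dvd_cancel by blast
    have dQ: "degree Q = degree Q2" using dvd_imp_degree_le[OF d1 Q2nz] dvd_imp_degree_le[OF d2 False] by simp
    have dP: "degree P = degree P2"
    proof (cases "P = 0")
      case True
      hence "P2 * Q = 0" using eq by simp
      hence "P2 = 0" using False by simp
      with True show ?thesis by simp
    next
      case Pnz: False
      hence P2nz: "P2 \<noteq> 0" using eq Q2nz by auto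
      have "degree (P * Q2) = degree P + degree Q2" by (rule degree_mult_eq[OF Pnz Q2nz])
      moreover have "degree (P2 * Q) = degree P2 + degree Q" by (rule degree_mult_eq[OF P2nz False])
      ultimately show ?thesis using eq dQ by simp
    qed
    show ?thesis using n dP dQ by simp
  qed
qed

lemma const_of_unit: fixes q :: "'k::field poly"
  assumes "is_unit q" obtains c where "q = [:c:]" "c \<noteq> 0"
proof -
  have "q \<noteq> 0" using assms by auto
  moreover have "degree q = 0" using assms by (metis degree_0 is_unit_iff_degree)
  ultimately show ?thesis using that by (metis degree_eq_zeroE pCons_eq_0_iff)
qed

lemma endo_poly:
  fixes \<phi> :: "'k::alg_closed_field ecpt \<Rightarrow> 'k ecpt"
  assumes e: "is_endo a b \<phi>" and naff: "\<And>x y. on_curve a b (Pt x y) \<Longrightarrow> \<phi> (Pt x y) \<noteq> Infty"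
  shows "\<exists>S T. \<forall>x y. on_curve a b (Pt x y) \<longrightarrow> \<phi> (Pt x y) = Pt (poly S x) (y * poly T x)"
proof -
  obtain p0 q0 u0 v0 where rep: "endo_rep a b \<phi> p0 q0 u0 v0" using e unfolding is_endo_def by blast
  have qx: "poly q0 x \<noteq> 0" for x
  proof
    assume q: "poly q0 x = 0"
    obtain y where y: "on_curve a b (Pt x y)" using ex_y by blast
    have "\<phi> (Pt x y) = Infty" by (rule rep_inf[OF rep y q])
    with naff[OF y] show False by simp
  qed
  have vx: "poly v0 x \<noteq> 0" for x
  proof -
    obtain y where y: "on_curve a b (Pt x y)" using ex_y by blast
    show ?thesis using rep_val[OF rep y qx] by simp
  qed
  have "is_unit q0" by (rule no_roots_unit) (use qx in auto)
  then obtain c where c: "q0 = [:c:]" "c \<noteq> 0" by (rule const_of_unit)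
  have "is_unit v0" by (rule no_roots_unit) (use vx in auto)
  then obtain d where d: "v0 = [:d:]" "d \<noteq> 0" by (rule const_of_unit)
  have "\<forall>x y. on_curve a b (Pt x y) \<longrightarrow> \<phi> (Pt x y) = Pt (poly (smult (inverse c) p0) x) (y * poly (smult (inverse d) u0) x)"
  proof (intro allI impI)
    fix x y assume y: "on_curve a b (Pt x y)"
    show "\<phi> (Pt x y) = Pt (poly (smult (inverse c) p0) x) (y * poly (smult (inverse d) u0) x)"
      using rep_val[OF rep y qx] c d by (simp add: field_simps)
  qed
  thus ?thesis by blast
qed

lemma deg1_form: fixes S :: "'k::field poly" assumes "degree S = 1"
  shows "S = [:coeff S 0, coeff S 1:]"
proof (rule poly_eqI)
  fix n show "coeff S n = coeff [:coeff S 0, coeff S 1:] n"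
  proof (cases n)
    case (Suc k) show ?thesis
    proof (cases k)
      case (Suc j)
      have "coeff S n = 0" using assms Suc \<open>n = Suc k\<close> by (intro coeff_eq_0) simp
      thus ?thesis using Suc \<open>n = Suc k\<close> by simp
    qed (simp add: \<open>n = Suc k\<close>)
  qed simp
qed

lemma aut_form:
  fixes \<phi> \<psi> :: "'k::alg_closed_field ecpt \<Rightarrow> 'k ecpt"
  assumes e1: "is_endo a b \<phi>" and e2: "is_endo a b \<psi>"
    and inv: "\<forall>P. on_curve a b P \<longrightarrow> \<psi> (\<phi> P) = P \<and> \<phi> (\<psi> P) = P"
    and three: "(3::'k) \<noteq> 0"
  shows "\<exists>al ta. al \<noteq> 0 \<and> ta \<noteq> 0 \<and> (\<forall>x y. on_curve a b (Pt x y) \<longrightarrow> \<phi> (Pt x y) = Pt (al*x) (ta*y))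
     \<and> al^3 = ta^2 \<and> a*al = a*ta^2 \<and> b = b*ta^2"
proof -
  have phiI: "\<phi> Infty = Infty" by (rule endo_infty[OF e1])
  have psiI: "\<psi> Infty = Infty" by (rule endo_infty[OF e2])
  have cp1: "\<And>P. on_curve a b P \<Longrightarrow> on_curve a b (\<phi> P)" using e1 unfolding is_endo_def by blast
  have naff1: "\<phi> (Pt x y) \<noteq> Infty" if "on_curve a b (Pt x y)" for x y
  proof
    assume "\<phi> (Pt x y) = Infty"
    hence "\<psi> (\<phi> (Pt x y)) = Infty" using psiI by simp
    with inv that show False by auto
  qed
  have naff2: "\<psi> (Pt x y) \<noteq> Infty" if "on_curve a b (Pt x y)" for x y
  proof
    assume "\<psi> (Pt x y) = Infty"
    hence "\<phi> (\<psi> (Pt x y)) = Infty" using phiI by simp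
    with inv that show False by auto
  qed
  obtain S T where ST: "\<forall>x y. on_curve a b (Pt x y) \<longrightarrow> \<phi> (Pt x y) = Pt (poly S x) (y * poly T x)"
    using endo_poly[OF e1 naff1] by blast
  obtain S' T' where ST': "\<forall>x y. on_curve a b (Pt x y) \<longrightarrow> \<psi> (Pt x y) = Pt (poly S' x) (y * poly T' x)"
    using endo_poly[OF e2 naff2] by blast
  have comp: "poly S' (poly S x) = x" for x
  proof -
    obtain y where y: "on_curve a b (Pt x y)" using ex_y by blast
    have fx: "\<phi> (Pt x y) = Pt (poly S x) (y * poly T x)" using ST y by blast
    have c1: "on_curve a b (Pt (poly S x) (y * poly T x))" using cp1[OF y] fx by simp
    have "\<psi> (\<phi> (Pt x y)) = Pt x y" using inv y by blast
    hence "\<psi> (Pt (poly S x) (y * poly T x)) = Pt x y" using fx by simp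
    hence "Pt (poly S' (poly S x)) (y * poly T x * poly T' (poly S x)) = Pt x y"
      using ST'[rule_format, OF c1] by simp
    thus ?thesis by simp
  qed
  have "pcompose S' S = [:0,1:]" by (rule poly_ext_all) (simp add: poly_pcompose comp)
  hence "degree S' * degree S = 1" using degree_pcompose[of S' S] by simp
  hence dS: "degree S = 1" by simp
  define f where "f = [:b,a,0,1::'k:]"
  have polyf: "poly f z = z^3 + a*z + b" for z by (simp add: f_def algebra_simps power3_eq_cube)
  have f0: "f \<noteq> 0" and df: "degree f = 3" by (simp_all add: f_def)
  have curveT: "f * T^2 = pcompose f S"
  proof (rule poly_ext_all)
    fix x
    obtain y where y: "on_curve a b (Pt x y)" using ex_y by blast
    have fx: "\<phi> (Pt x y) = Pt (poly S x) (y * poly T x)" using ST y by blast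
    have "on_curve a b (\<phi> (Pt x y))" by (rule cp1[OF y])
    hence "(y * poly T x)^2 = (poly S x)^3 + a*poly S x + b" using fx by (simp add: on_curve_def)
    moreover have "y^2 = x^3 + a*x + b" using y by (simp add: on_curve_def)
    ultimately show "poly (f * T^2) x = poly (pcompose f S) x"
      by (simp add: poly_pcompose polyf power_mult_distrib mult.commute)
  qed
  have dfS: "degree (pcompose f S) = 3" using degree_pcompose[of f S] dS df by simp
  have Tnz: "T \<noteq> 0" using curveT dfS by auto
  have "degree (f * T^2) = 3 + 2 * degree T" using f0 Tnz df by (simp add: degree_mult_eq degree_power_eq)
  hence "degree T = 0" using curveT dfS by simp
  then obtain ta where Tc: "T = [:ta:]" by (metis degree_eq_zeroE)
  have tanz: "ta \<noteq> 0" using Tnz Tc by simp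
  define al where "al = coeff S 1"
  define be where "be = coeff S 0"
  have Sform: "S = [:be, al:]" unfolding al_def be_def by (rule deg1_form[OF dS])
  have alnz: "al \<noteq> 0" using dS Sform by auto
  have pt: "(al*x+be)^3 + a*(al*x+be) + b = ta^2 * (x^3 + a*x + b)" for x
  proof -
    have "poly (f * T^2) x = poly (pcompose f S) x" using curveT by simp
    thus ?thesis by (simp add: poly_pcompose polyf Sform Tc algebra_simps)
  qed
  define L where "L = [:be^3 + a*be + b, 3*al*be^2 + a*al, 3*al^2*be, al^3:]"
  define R where "R = [:ta^2*b, ta^2*a, 0, ta^2:]"
  have "L = R"
  proof (rule poly_ext_all)
    fix x
    have "poly L x = (al*x+be)^3 + a*(al*x+be) + b"
      by (simp add: L_def algebra_simps power2_eq_square power3_eq_cube)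
    moreover have "poly R x = ta^2 * (x^3 + a*x + b)"
      by (simp add: R_def algebra_simps power2_eq_square power3_eq_cube)
    ultimately show "poly L x = poly R x" using pt by simp
  qed
  hence co: "be^3 + a*be + b = ta^2*b" "3*al*be^2 + a*al = ta^2*a" "3*al^2*be = 0" "al^3 = ta^2"
    by (simp_all add: L_def R_def)
  have be0: "be = 0" using co(3) three alnz by simp
  have form: "\<forall>x y. on_curve a b (Pt x y) \<longrightarrow> \<phi> (Pt x y) = Pt (al*x) (ta*y)"
    using ST by (simp add: Sform Tc be0 mult.commute)
  show ?thesis
    using alnz tanz form co be0 by (intro exI[of _ al] exI[of _ ta]) (simp add: mult.commute)
qed

lemma lead_sc: fixes A :: "'k::field poly" assumes "c \<noteq> 0"
  shows "lead_coeff (sc c A) = c^(degree A) * lead_coeff A"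
  using assms by (simp add: degree_sc coeff_sc)

lemma degF_gt: fixes P Q :: "'k::field poly"
  assumes "degree Q < degree P"
  shows "degree (P^3 + smult a (P*Q^2) + smult b (Q^3)) = 3 * degree P"
proof -
  have Pnz: "P \<noteq> 0" using assms by auto
  have d3: "degree (P^3) = 3 * degree P" by (simp add: degree_power_eq Pnz)
  have dA: "degree (smult a (P*Q^2)) < 3 * degree P"
  proof -
    have "degree (smult a (P*Q^2)) \<le> degree (P*Q^2)" by (rule degree_smult_le)
    also have "\<dots> \<le> degree P + degree (Q^2)" by (rule degree_mult_le)
    also have "\<dots> \<le> degree P + 2 * degree Q" using degree_power_le[of Q 2] by simp
    finally show ?thesis using assms by linarith
  qed
  have dB: "degree (smult b (Q^3)) < 3 * degree P"
  proof -
    have "degree (smult b (Q^3)) \<le> degree (Q^3)" by (rule degree_smult_le)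
    also have "\<dots> \<le> 3 * degree Q" using degree_power_le[of Q 3] by simp
    finally show ?thesis using assms by linarith
  qed
  have e1: "degree (P^3 + smult a (P*Q^2)) = 3 * degree P"
    using dA d3 by (subst degree_add_eq_left) simp_all
  show ?thesis using dB e1 by (subst degree_add_eq_left) simp_all
qed

lemma degF_E0: fixes P Q :: "'k::field poly"
  assumes "degree P < degree Q"
  shows "degree (P^3 + smult 0 (P*Q^2) + smult (-1) (Q^3)) = 3 * degree Q"
proof -
  have Qnz: "Q \<noteq> 0" using assms by auto
  have d3: "degree (smult (-1) (Q^3)) = 3 * degree Q" by (simp add: degree_power_eq Qnz)
  have "degree (P^3) \<le> 3 * degree P" using degree_power_le[of P 3] by simp
  hence lt: "degree (P^3) < degree (smult (-1) (Q^3))" using d3 assms by linarith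
  have eq: "P^3 + smult 0 (P*Q^2) + smult (-1) (Q^3) = P^3 + smult (-1) (Q^3)" by simp
  have "degree (P^3 + smult (-1) (Q^3)) = degree (smult (-1) (Q^3))" by (rule degree_add_eq_right[OF lt])
  thus ?thesis by (simp only: eq d3)
qed

lemma degF_E1728: fixes P Q :: "'k::field poly"
  assumes "degree P < degree Q" "P \<noteq> 0"
  shows "degree (P^3 + smult (-1) (P*Q^2) + smult 0 (Q^3)) = degree P + 2 * degree Q"
proof -
  have Qnz: "Q \<noteq> 0" using assms by auto
  have d3: "degree (smult (-1) (P*Q^2)) = degree P + 2 * degree Q"
    using assms(2) Qnz by (simp add: degree_power_eq degree_mult_eq)
  have "degree (P^3) \<le> 3 * degree P" using degree_power_le[of P 3] by simp
  hence lt: "degree (P^3) < degree (smult (-1) (P*Q^2))" using d3 assms by linarith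
  have eq: "P^3 + smult (-1) (P*Q^2) + smult 0 (Q^3) = P^3 + smult (-1) (P*Q^2)" by simp
  have "degree (P^3 + smult (-1) (P*Q^2)) = degree (smult (-1) (P*Q^2))" by (rule degree_add_eq_right[OF lt])
  thus ?thesis by (simp only: eq d3)
qed

lemma clear_denoms:
  fixes y uu vv pp qq a b :: "'k::field"
  assumes v: "vv \<noteq> 0" and q: "qq \<noteq> 0" and E: "(y*uu/vv)^2 = (pp/qq)^3 + a*(pp/qq) + b"
  shows "y^2*uu^2*qq^3 = (pp^3 + a*pp*qq^2 + b*qq^3)*vv^2"
proof -
  have l: "(y*uu/vv)^2 * (vv^2*qq^3) = y^2*uu^2*qq^3"
    using v by (simp add: power_divide power_mult_distrib)
  have r: "((pp/qq)^3 + a*(pp/qq) + b) * (vv^2*qq^3) = (pp^3 + a*pp*qq^2 + b*qq^3)*vv^2"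
    using q by (simp add: field_simps power2_eq_square power3_eq_cube)
  show ?thesis by (metis l r E)
qed

theorem mainTheorem12:
  fixes p :: nat and a b :: "'k::alg_closed_field"
    and \<phi> \<phi>bar \<theta> :: "'k ecpt \<Rightarrow> 'k ecpt"
  assumes "prime p" and "p > 3" and "CHAR('k) = p"
    and "algebraic_over_prime_field TYPE('k)"
    and "(a = 0 \<and> b = -1 \<and> p mod 3 = 2) \<or> (a = -1 \<and> b = 0 \<and> p mod 4 = 3)"
    and "is_endo a b \<phi>" and "is_endo a b \<phi>bar"
    and "\<forall>P. on_curve a b P \<longrightarrow> \<phi>bar (\<phi> P) = P \<and> \<phi> (\<phi>bar P) = P"
    and "\<exists>P. on_curve a b P \<and> \<phi> P \<noteq> P"
    and "\<exists>P. on_curve a b P \<and> \<phi> P \<noteq> ec_neg P"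
    and "is_endo a b \<theta>"
    and "\<exists>P. on_curve a b P \<and> \<theta> P \<noteq> Infty"
    and "\<forall>P. on_curve a b P \<longrightarrow> \<phi>bar (\<theta> P) = \<theta> (\<phi> P)"
  shows "ec_deg a b \<theta> \<ge> p"
proof -
  note A = assms
  have curvecase: "(a = 0 \<and> b = -1) \<or> (a = -1 \<and> b = 0)" using A(5) by auto
  have two: "(2::'k) \<noteq> 0"
  proof
    assume "(2::'k) = 0"
    hence "of_nat 2 = (0::'k)" by simp
    hence "CHAR('k) dvd 2" by (rule of_nat_eq_0_iff_char_dvd[THEN iffD1])
    hence "p \<le> 2" using A(3) by (auto dest: dvd_imp_le)
    with A(2) show False by simp
  qed
  have three: "(3::'k) \<noteq> 0"
  proof
    assume "(3::'k) = 0"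
    hence "of_nat 3 = (0::'k)" by simp
    hence "CHAR('k) dvd 3" by (rule of_nat_eq_0_iff_char_dvd[THEN iffD1])
    hence "p \<le> 3" using A(3) by (auto dest: dvd_imp_le)
    with A(2) show False by simp
  qed
  have inv': "\<forall>P. on_curve a b P \<longrightarrow> \<phi> (\<phi>bar P) = P \<and> \<phi>bar (\<phi> P) = P" using A(8) by blast
  obtain al ta where AT: "al \<noteq> 0" "ta \<noteq> 0" "\<forall>x y. on_curve a b (Pt x y) \<longrightarrow> \<phi> (Pt x y) = Pt (al*x) (ta*y)"
      "al^3 = ta^2" "a*al = a*ta^2" "b = b*ta^2"
    using aut_form[OF A(6) A(7) A(8) three] by blast
  obtain al' ta' where AT': "al' \<noteq> 0" "ta' \<noteq> 0" "\<forall>x y. on_curve a b (Pt x y) \<longrightarrow> \<phi>bar (Pt x y) = Pt (al'*x) (ta'*y)"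
      "al'^3 = ta'^2" "a*al' = a*ta'^2" "b = b*ta'^2"
    using aut_form[OF A(7) A(6) inv' three] by blast
  have phiI: "\<phi> Infty = Infty" by (rule endo_infty[OF A(6)])
  have thI: "\<theta> Infty = Infty" by (rule endo_infty[OF A(11)])
  have cpphi: "\<And>P. on_curve a b P \<Longrightarrow> on_curve a b (\<phi> P)" using A(6) unfolding is_endo_def by blast
  have cpth: "\<And>P. on_curve a b P \<Longrightarrow> on_curve a b (\<theta> P)" using A(11) unfolding is_endo_def by blast
  have homth: "\<And>P Q. on_curve a b P \<Longrightarrow> on_curve a b Q \<Longrightarrow> \<theta> (ec_add a b P Q) = ec_add a b (\<theta> P) (\<theta> Q)"
    using A(11) unfolding is_endo_def by blast
  define fp where "fp = [:b,a,0,1::'k:]"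
  have polyf: "poly fp z = z^3 + a*z + b" for z by (simp add: fp_def algebra_simps power3_eq_cube)
  have fpnz: "fp \<noteq> 0" by (simp add: fp_def)
  have dfp: "degree fp = 3" by (simp add: fp_def)
  have oc: "on_curve a b (Pt x y) \<longleftrightarrow> y^2 = poly fp x" for x y by (simp add: on_curve_def polyf)
  obtain x0 where x0: "poly ([:0,1:] * fp) x0 \<noteq> 0" using ex_nonroot[of "[:0,1:] * fp"] fpnz by auto
  have x0nz: "x0 \<noteq> 0" and fx0: "poly fp x0 \<noteq> 0" using x0 by auto
  obtain y0 where y0: "on_curve a b (Pt x0 y0)" using ex_y by blast
  have y0nz: "y0 \<noteq> 0" using y0 fx0 by (auto simp: oc)
  have comp: "\<phi>bar (\<phi> (Pt x y)) = Pt (al'*(al*x)) (ta'*(ta*y))" if "on_curve a b (Pt x y)" for x y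
  proof -
    have "\<phi> (Pt x y) = Pt (al*x) (ta*y)" using AT(3) that by blast
    moreover have "on_curve a b (Pt (al*x) (ta*y))" using cpphi[OF that] calculation by simp
    ultimately show ?thesis using AT'(3) by simp
  qed
  have "Pt (al'*(al*x0)) (ta'*(ta*y0)) = Pt x0 y0" using comp[OF y0] A(8) y0 by simp
  hence "(al'*al) * x0 = 1 * x0" "(ta'*ta) * y0 = 1 * y0" by (simp_all add: mult.assoc)
  hence inv1: "al' * al = 1" and inv2: "ta' * ta = 1" using x0nz y0nz by (meson mult_right_cancel)+
  have nt1: "\<not> (al = 1 \<and> ta = 1)"
  proof
    assume h: "al = 1 \<and> ta = 1"
    obtain P where P: "on_curve a b P" "\<phi> P \<noteq> P" using A(9) by blast
    show False
    proof (cases P)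
      case Infty thus False using P phiI by simp
    next
      case (Pt x y) thus False using P AT(3) h by simp
    qed
  qed
  have nt2: "\<not> (al = 1 \<and> ta = -1)"
  proof
    assume h: "al = 1 \<and> ta = -1"
    obtain P where P: "on_curve a b P" "\<phi> P \<noteq> ec_neg P" using A(10) by blast
    show False
    proof (cases P)
      case Infty thus False using P phiI by (simp add: ec_neg_def)
    next
      case (Pt x y) thus False using P AT(3) h by (simp add: ec_neg_def)
    qed
  qed
  have keyal: "al \<noteq> 1 \<and> ta^2 \<noteq> al^2"
    using curvecase
  proof
    assume ab: "a = 0 \<and> b = -1"
    hence t2: "ta^2 = 1" using AT(6) by simp
    hence "ta = 1 \<or> ta = -1" by (simp add: power2_eq_1_iff)
    hence aln1: "al \<noteq> 1" using nt1 nt2 by auto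
    have a3: "al^3 = 1" using AT(4) t2 by simp
    have "al^2 \<noteq> 1"
    proof
      assume "al^2 = 1"
      hence "al^3 = al" by (simp add: power3_eq_cube power2_eq_square)
      with a3 aln1 show False by simp
    qed
    with aln1 t2 show ?thesis by simp
  next
    assume ab: "a = -1 \<and> b = 0"
    hence at: "al = ta^2" using AT(5) by simp
    hence "al^3 = al" using AT(4) by simp
    hence "al * (al^2 - 1) = 0" by (simp add: algebra_simps power3_eq_cube power2_eq_square)
    hence "al^2 = 1" using AT(1) by simp
    hence "al = 1 \<or> al = -1" by (simp add: power2_eq_1_iff)
    moreover have "al \<noteq> 1"
    proof
      assume "al = 1"
      hence "ta^2 = 1" using at by simp
      hence "ta = 1 \<or> ta = -1" by (simp add: power2_eq_1_iff)
      with nt1 nt2 \<open>al = 1\<close> show False by auto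
    qed
    ultimately have "al = -1" by simp
    hence "ta^2 = -1" "al^2 = 1" using at by simp_all
    moreover have "(-1::'k) \<noteq> 1"
    proof
      assume "(-1::'k) = 1"
      hence "(2::'k) = 0" by (metis neg_eq_iff_add_eq_0 one_add_one)
      with two show False by simp
    qed
    ultimately show ?thesis using \<open>al \<noteq> 1\<close> by simp
  qed
  have neq: "al' * ta \<noteq> al * ta'"
  proof
    assume h: "al' * ta = al * ta'"
    hence "(al' * al) * (ta * ta) = (ta' * ta) * (al * al)" by (metis mult.assoc mult.commute)
    hence "ta^2 = al^2" using inv1 inv2 by (simp add: power2_eq_square)
    with keyal show False by simp
  qed
  have nocommon: "\<And>t. t^3 + a*t + b = 0 \<Longrightarrow> 3*t^2 + a \<noteq> 0"
    using curvecase
  proof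
    fix t assume ab: "a = 0 \<and> b = -1" and e: "t^3 + a*t + b = 0"
    show "3*t^2 + a \<noteq> 0"
    proof
      assume "3*t^2 + a = 0"
      hence "t = 0" using ab three by simp
      with e ab show False by simp
    qed
  next
    fix t assume ab: "a = -1 \<and> b = 0" and e: "t^3 + a*t + b = 0"
    show "3*t^2 + a \<noteq> 0"
    proof
      assume h: "3*t^2 + a = 0"
      have "t * (t^2 - 1) = 0" using e ab by (simp add: algebra_simps power3_eq_cube power2_eq_square)
      hence "t = 0 \<or> t^2 = 1" by simp
      thus False
      proof
        assume "t = 0" with h ab show False by simp
      next
        assume "t^2 = 1" with h ab have "(2::'k) = 0" by simp
        with two show False by simp
      qed
    qed
  qed
  obtain P0 Q0 u v where rep: "endo_rep a b \<theta> P0 Q0 u v" using A(11) unfolding is_endo_def by blast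
  have cPQ: "coprime P0 Q0" by (rule rep_coprime[OF rep])
  have Q0nz: "Q0 \<noteq> 0"
  proof
    assume Q0: "Q0 = 0"
    obtain P where P: "on_curve a b P" "\<theta> P \<noteq> Infty" using A(12) by blast
    show False
    proof (cases P)
      case Infty thus False using P thI by simp
    next
      case (Pt x y) thus False using P rep_inf[OF rep, of x y] Q0 by simp
    qed
  qed
  have vnz: "v \<noteq> 0"
  proof -
    obtain x2 where x2: "poly Q0 x2 \<noteq> 0" using ex_nonroot[OF Q0nz] by blast
    obtain y2 where y2: "on_curve a b (Pt x2 y2)" using ex_y by blast
    have "poly v x2 \<noteq> 0" using rep_val[OF rep y2 x2] by simp
    thus ?thesis by auto
  qed
  define F0 where "F0 = P0^3 + smult a (P0*Q0^2) + smult b (Q0^3)"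
  have polyF0: "poly F0 x = poly P0 x ^3 + a * poly P0 x * poly Q0 x ^2 + b * poly Q0 x ^3" for x
    by (simp add: F0_def)
  have curveuv: "fp * u^2 * Q0^3 = F0 * v^2"
  proof (rule poly_ext_cof[OF Q0nz])
    fix x assume qx: "poly Q0 x \<noteq> 0"
    obtain y where y: "on_curve a b (Pt x y)" using ex_y by blast
    have th: "\<theta> (Pt x y) = Pt (poly P0 x / poly Q0 x) (y * poly u x / poly v x)" and vx: "poly v x \<noteq> 0"
      using rep_val[OF rep y qx] by simp_all
    have "on_curve a b (\<theta> (Pt x y))" by (rule cpth[OF y])
    hence E: "(y * poly u x / poly v x)^2 = (poly P0 x / poly Q0 x)^3 + a * (poly P0 x / poly Q0 x) + b"
      using th by (simp add: on_curve_def)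
    have yy: "y^2 = poly fp x" using y by (simp add: oc)
    have "y^2 * poly u x ^2 * poly Q0 x ^3 = (poly P0 x ^3 + a * poly P0 x * poly Q0 x ^2 + b * poly Q0 x ^3) * poly v x ^2"
      by (rule clear_denoms[OF vx qx E])
    thus "poly (fp * u^2 * Q0^3) x = poly (F0 * v^2) x" using yy by (simp add: polyF0)
  qed
  obtain G U V where GUV: "G \<noteq> 0" "u = G*U" "v = G*V" "coprime U V" using coprime_decomp[OF vnz] by blast
  have Vnz: "V \<noteq> 0" using vnz GUV by auto
  have curveUV: "fp * U^2 * Q0^3 = F0 * V^2"
  proof -
    have "G^2 * (fp * U^2 * Q0^3) = G^2 * (F0 * V^2)" using curveuv GUV by (simp add: algebra_simps power2_eq_square)
    thus ?thesis using GUV(1) by simp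
  qed
  define W where "W = Q0 * sc al Q0 * fp"
  have Wnz: "W \<noteq> 0" using Q0nz fpnz AT(1) by (simp add: W_def sc_eq0)
  have key: "al' * (poly P0 x / poly Q0 x) = poly P0 (al*x) / poly Q0 (al*x) \<and>
      ta' * (poly u x / poly v x) = ta * (poly u (al*x) / poly v (al*x)) \<and>
      poly Q0 x \<noteq> 0 \<and> poly Q0 (al*x) \<noteq> 0 \<and> poly v x \<noteq> 0 \<and> poly v (al*x) \<noteq> 0"
    if Wx: "poly W x \<noteq> 0" for x
  proof -
    have qx: "poly Q0 x \<noteq> 0" and qax: "poly Q0 (al*x) \<noteq> 0" and fx: "poly fp x \<noteq> 0"
      using Wx by (auto simp: W_def poly_sc)
    obtain y where y: "on_curve a b (Pt x y)" using ex_y by blast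
    have ynz: "y \<noteq> 0" using y fx by (auto simp: oc)
    have th: "\<theta> (Pt x y) = Pt (poly P0 x / poly Q0 x) (y * poly u x / poly v x)" and vx: "poly v x \<noteq> 0"
      using rep_val[OF rep y qx] by simp_all
    have c1: "on_curve a b (Pt (poly P0 x / poly Q0 x) (y * poly u x / poly v x))" using cpth[OF y] th by simp
    have L: "\<phi>bar (\<theta> (Pt x y)) = Pt (al' * (poly P0 x / poly Q0 x)) (ta' * (y * poly u x / poly v x))"
      using th AT'(3) c1 by simp
    have ph: "\<phi> (Pt x y) = Pt (al*x) (ta*y)" using AT(3) y by blast
    have c2: "on_curve a b (Pt (al*x) (ta*y))" using cpphi[OF y] ph by simp
    have th2: "\<theta> (Pt (al*x) (ta*y)) = Pt (poly P0 (al*x) / poly Q0 (al*x)) (ta*y * poly u (al*x) / poly v (al*x))"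
      and vax: "poly v (al*x) \<noteq> 0"
      using rep_val[OF rep c2 qax] by simp_all
    have "\<phi>bar (\<theta> (Pt x y)) = \<theta> (\<phi> (Pt x y))" using A(13) y by blast
    hence "Pt (al' * (poly P0 x / poly Q0 x)) (ta' * (y * poly u x / poly v x)) =
           Pt (poly P0 (al*x) / poly Q0 (al*x)) (ta*y * poly u (al*x) / poly v (al*x))"
      using L ph th2 by simp
    hence e1: "al' * (poly P0 x / poly Q0 x) = poly P0 (al*x) / poly Q0 (al*x)"
      and e2: "ta' * (y * poly u x / poly v x) = ta*y * poly u (al*x) / poly v (al*x)" by simp_all
    have r1: "ta' * (poly u x / poly v x) = (ta' * (y * poly u x / poly v x)) / y"
      using ynz by (simp add: field_simps)
    have r2: "ta * (poly u (al*x) / poly v (al*x)) = (ta*y * poly u (al*x) / poly v (al*x)) / y"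
      using ynz by (simp add: field_simps)
    have e2': "ta' * (poly u x / poly v x) = ta * (poly u (al*x) / poly v (al*x))"
      by (metis r1 r2 e2)
    show ?thesis using e1 e2' qx qax vx vax by simp
  qed
  have sym1: "sc al P0 * Q0 = smult al' (P0 * sc al Q0)"
  proof (rule poly_ext_cof[OF Wnz])
    fix x assume "poly W x \<noteq> 0"
    note k = key[OF this]
    have h: "al' * (poly P0 x / poly Q0 x) = poly P0 (al*x) / poly Q0 (al*x)" using k by blast
    have n1: "poly Q0 x \<noteq> 0" and n2: "poly Q0 (al*x) \<noteq> 0" using k by blast+
    have "al' * poly P0 x * poly Q0 (al*x) = poly P0 (al*x) * poly Q0 x"
      using h n1 n2 by (simp add: field_simps)
    thus "poly (sc al P0 * Q0) x = poly (smult al' (P0 * sc al Q0)) x"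
      by (simp add: poly_sc algebra_simps)
  qed
  have sym2raw: "smult ta' (u * sc al v) = smult ta (sc al u * v)"
  proof (rule poly_ext_cof[OF Wnz])
    fix x assume "poly W x \<noteq> 0"
    note k = key[OF this]
    have h: "ta' * (poly u x / poly v x) = ta * (poly u (al*x) / poly v (al*x))" using k by blast
    have n1: "poly v x \<noteq> 0" and n2: "poly v (al*x) \<noteq> 0" using k by blast+
    have "ta' * poly u x * poly v (al*x) = ta * poly u (al*x) * poly v x"
      using h n1 n2 by (simp add: field_simps)
    thus "poly (smult ta' (u * sc al v)) x = poly (smult ta (sc al u * v)) x"
      by (simp add: poly_sc algebra_simps)
  qed
  have sym2: "smult ta' (U * sc al V) = smult ta (sc al U * V)"
  proof -
    have "(G * sc al G) * smult ta' (U * sc al V) = (G * sc al G) * smult ta (sc al U * V)"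
      using sym2raw GUV by (simp add: sc_mult algebra_simps)
    moreover have "G * sc al G \<noteq> 0" using GUV(1) AT(1) by (simp add: sc_eq0)
    ultimately show ?thesis by (metis mult_left_cancel)
  qed
  have P0nz: "P0 \<noteq> 0"
  proof
    assume P0: "P0 = 0"
    have qall: "\<And>x. poly Q0 x \<noteq> 0" using cPQ P0 by (simp add: coprime_roots)
    hence dQ0: "degree Q0 = 0" using alg_closed_imp_poly_has_root by blast
    have F0b: "F0 = smult b (Q0^3)" using P0 by (simp add: F0_def)
    from curvecase show False
    proof
      assume ab: "a = 0 \<and> b = -1"
      have F0nz: "F0 \<noteq> 0" using F0b ab Q0nz by simp
      have dF0: "degree F0 = 0" using F0b dQ0 by (simp add: degree_power_eq Q0nz)
      have Unz: "U \<noteq> 0"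
      proof
        assume "U = 0"
        hence "F0 * V^2 = 0" using curveUV by simp
        with F0nz Vnz show False by simp
      qed
      have "degree (fp * U^2 * Q0^3) = 3 + 2 * degree U"
        using fpnz Unz Q0nz dQ0 dfp by (simp add: degree_mult_eq degree_power_eq)
      moreover have "degree (F0 * V^2) = 2 * degree V"
        using F0nz Vnz dF0 by (simp add: degree_mult_eq degree_power_eq)
      ultimately have "3 + 2 * degree U = 2 * degree V" using curveUV by simp
      thus False by presburger
    next
      assume ab: "a = -1 \<and> b = 0"
      hence "F0 = 0" using F0b by simp
      hence "fp * U^2 * Q0^3 = 0" using curveUV by simp
      hence U0: "U = 0" using fpnz Q0nz by simp
      have thz: "\<theta> (Pt x y) = Pt 0 0" if "on_curve a b (Pt x y)" for x y
        using rep_val[OF rep that qall] P0 GUV U0 by simp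
      have y0n: "y0 \<noteq> - y0"
      proof
        assume "y0 = - y0"
        hence "2 * y0 = 0" by (metis eq_neg_iff_add_eq_0 mult_2)
        with two y0nz show False by simp
      qed
      define P2 where "P2 = ec_add a b (Pt x0 y0) (Pt x0 y0)"
      have cP2: "on_curve a b P2" unfolding P2_def by (rule dbl_on_curve[OF y0 y0n])
      have "P2 \<noteq> Infty" using y0n by (simp add: P2_def Let_def)
      then obtain x3 y3 where P2e: "P2 = Pt x3 y3" by (cases P2) auto
      have "\<theta> P2 = ec_add a b (\<theta> (Pt x0 y0)) (\<theta> (Pt x0 y0))" unfolding P2_def by (rule homth[OF y0 y0])
      also have "\<dots> = Infty" using thz[OF y0] by simp
      finally have "\<theta> P2 = Infty" .
      moreover have "\<theta> P2 = Pt 0 0" using thz cP2 P2e by simp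
      ultimately show False by simp
    qed
  qed
  have nm: "degree P0 \<noteq> degree Q0"
  proof
    assume e: "degree P0 = degree Q0"
    have "lead_coeff (sc al P0 * Q0) = lead_coeff (smult al' (P0 * sc al Q0))" using sym1 by simp
    hence "al^(degree P0) * lead_coeff P0 * lead_coeff Q0 = al' * (lead_coeff P0 * (al^(degree Q0) * lead_coeff Q0))"
      by (simp add: lead_coeff_mult lead_sc[OF AT(1)])
    moreover have "lead_coeff P0 \<noteq> 0" using P0nz by simp
    ultimately have "al' = 1" using e P0nz Q0nz AT(1) by simp
    hence "al = 1" using inv1 by simp
    with keyal show False by simp
  qed
  have degF: "degree F0 \<ge> 2 * degree P0 + degree Q0 + 1"
  proof (cases "degree Q0 < degree P0")
    case True
    thus ?thesis unfolding F0_def using degF_gt[OF True] by simp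
  next
    case False
    hence lt: "degree P0 < degree Q0" using nm by simp
    from curvecase show ?thesis
    proof
      assume ab: "a = 0 \<and> b = -1"
      thus ?thesis unfolding F0_def using degF_E0[OF lt] lt by simp
    next
      assume ab: "a = -1 \<and> b = 0"
      thus ?thesis unfolding F0_def using degF_E1728[OF lt P0nz] lt by simp
    qed
  qed
  have curveC: "[:b,a,0,1:] * U^2 * Q0^3 = (P0^3 + smult a (P0*Q0^2) + smult b (Q0^3)) * V^2"
    using curveUV by (simp only: fp_def F0_def)
  have "p \<le> max (degree P0) (degree Q0)"
    by (rule core[OF A(3) nocommon cPQ Q0nz GUV(4) Vnz curveC degF[unfolded F0_def] sym1 sym2
          AT(1) AT'(1) AT(2) AT'(2) neq])
  thus ?thesis using ec_deg_eq[OF rep] by simp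
qed

end
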